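(* Let $p\ge q>0$ with $pq>1$, and let $(u,v)$ be a positive bounded classical solution of $-\Delta u=v^p$, $-\Delta v=u^q$ in $\mathbb{R}^n$. Then $$v^{p+1}(x)\le\frac{p+1}{q+1}\,u^{q+1}(x)\qquad\text{for all }x\in\mathbb{R}^n.$$ *)

theory Defs
  imports "HOL-Analysis.Analysis"
begin

definition partial :: "'n::finite \<Rightarrow> (real^'n \<Rightarrow> real) \<Rightarrow> real^'n \<Rightarrow> real" where
  "partial i f x = deriv (\<lambda>t. f (x + t *\<^sub>R axis i 1)) 0"

definition partial_differentiable :: "'n::finite \<Rightarrow> (real^'n \<Rightarrow> real) \<Rightarrow> bool" where
  "partial_differentiable i f \<longleftrightarrow> (\<forall>x. (\<lambda>t. f (x + t *\<^sub>R axis i 1)) differentiable (at 0))"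

definition C2 :: "(real^'n::finite \<Rightarrow> real) \<Rightarrow> bool" where
  "C2 f \<longleftrightarrow> continuous_on UNIV f \<and>
     (\<forall>i. partial_differentiable i f \<and> continuous_on UNIV (partial i f) \<and>
        (\<forall>j. partial_differentiable j (partial i f) \<and> continuous_on UNIV (partial j (partial i f))))"

definition laplacian :: "(real^'n::finite \<Rightarrow> real) \<Rightarrow> real^'n \<Rightarrow> real" where
  "laplacian f x = (\<Sum>i\<in>UNIV. partial i (partial i f) x)"

end

theory Submission
  imports Defs
begin

lemma partial_has_deriv:
  assumes "partial_differentiable i f"
  shows "((\<lambda>t. f (x + t *\<^sub>R axis i 1)) has_real_derivative partial i f (x + s *\<^sub>R axis i 1)) (at s)"
proof -
  let ?y = "x + s *\<^sub>R axis i 1"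
  have "(\<lambda>t. f (?y + t *\<^sub>R axis i 1)) differentiable (at 0)"
    using assms unfolding partial_differentiable_def by blast
  hence "((\<lambda>t. f (?y + t *\<^sub>R axis i 1)) has_real_derivative partial i f ?y) (at 0)"
    unfolding partial_def using DERIV_deriv_iff_real_differentiable by blast
  moreover have "(\<lambda>t. f (?y + t *\<^sub>R axis i 1)) = (\<lambda>t. (\<lambda>t. f (x + t *\<^sub>R axis i 1)) (t + s))"
    by (rule ext) (simp add: scaleR_add_left algebra_simps)
  ultimately have "((\<lambda>t. (\<lambda>t. f (x + t *\<^sub>R axis i 1)) (t + s)) has_real_derivative partial i f ?y) (at 0)"
    by simp
  thus ?thesis using DERIV_shift[of "(\<lambda>t. f (x + t *\<^sub>R axis i 1))" "partial i f ?y" 0 s] by simp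
qed

lemma second_deriv_max:
  fixes g g' :: "real \<Rightarrow> real"
  assumes d1: "\<And>t. (g has_real_derivative g' t) (at t)"
    and d2: "(g' has_real_derivative D) (at 0)"
    and mx: "\<And>t. g t \<le> g 0"
  shows "D \<le> 0"
proof (rule ccontr)
  assume "\<not> D \<le> 0"
  hence D: "D > 0" by simp
  have g0: "g' 0 = 0"
    using DERIV_local_max[OF d1[of 0], of 1] mx by auto
  obtain d where d: "d > 0" "\<And>h. h > 0 \<Longrightarrow> h < d \<Longrightarrow> g' 0 < g' (0 + h)"
    using DERIV_pos_inc_right[OF d2 D] by blast
  have "\<exists>z. 0 < z \<and> z < d/2 \<and> g (d/2) - g 0 = (d/2 - 0) * g' z"
    by (rule MVT2) (use d d1 in auto)
  then obtain z where z: "0 < z" "z < d/2" "g (d/2) - g 0 = (d/2) * g' z" by auto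
  have "g' z > 0" using d(2)[of z] z g0 d by auto
  hence "(d/2) * g' z > 0" using d by simp
  hence "g (d/2) - g 0 > 0" using z by simp
  thus False using mx[of "d/2"] by simp
qed

lemma superadd_powr:
  fixes a b p :: real
  assumes "a \<ge> 0" "b \<ge> 0" "p \<ge> 1"
  shows "a powr p + b powr p \<le> (a + b) powr p"
proof (cases "a + b = 0")
  case True hence "a = 0" "b = 0" using assms by auto
  thus ?thesis by simp
next
  case False
  define s where "s = a + b"
  have s: "s > 0" using False assms s_def by simp
  have "a / s \<le> 1" "b / s \<le> 1" using assms s s_def by auto
  hence "(a/s) powr p \<le> (a/s) powr 1" "(b/s) powr p \<le> (b/s) powr 1"
    using powr_mono'[of 1 p] assms s by auto
  moreover have "a/s + b/s = 1" using s s_def by (simp add: add_divide_distrib[symmetric])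
  ultimately have "(a/s) powr p + (b/s) powr p \<le> 1"
    using assms s by simp
  hence "s powr p * ((a/s) powr p + (b/s) powr p) \<le> s powr p"
    by (simp add: mult_left_le)
  moreover have "s powr p * ((a/s) powr p + (b/s) powr p) = a powr p + b powr p"
    using s assms by (simp add: distrib_left powr_divide)
  ultimately show ?thesis using s_def by simp
qed

lemma norm_line:
  fixes y e :: "real^'n"
  assumes "e \<bullet> e = 1"
  shows "(norm (y + t *\<^sub>R e))\<^sup>2 = y \<bullet> y + 2 * t * (y \<bullet> e) + t\<^sup>2"
  using assms by (simp only: power2_norm_eq_inner)
    (simp add: inner_add_left inner_add_right inner_commute power2_eq_square algebra_simps)

lemma coord_ineq:
  fixes u v :: "real^'n \<Rightarrow> real" and xs x1 :: "real^'n"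
  assumes "C2 u" "C2 v" "\<And>x. u x > 0"
    and mx: "\<And>x. v x - l * u x powr \<sigma> - \<delta> * (norm (x - x1))\<^sup>2
                 \<le> v xs - l * u xs powr \<sigma> - \<delta> * (norm (xs - x1))\<^sup>2"
  shows "partial i (partial i v) xs - l*(\<sigma>*((\<sigma>-1) * u xs powr (\<sigma>-1-1) * partial i u xs * partial i u xs
           + u xs powr (\<sigma>-1) * partial i (partial i u) xs)) - \<delta>*2 \<le> 0"
proof -
  define e :: "real^'n" where "e = axis i 1"
  define y where "y = xs - x1"
  have ee: "e \<bullet> e = 1" unfolding e_def by (simp add: inner_axis_axis)
  define U where "U t = u (xs + t *\<^sub>R e)" for t
  define V where "V t = v (xs + t *\<^sub>R e)" for t
  define U' where "U' t = partial i u (xs + t *\<^sub>R e)" for t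
  define V' where "V' t = partial i v (xs + t *\<^sub>R e)" for t
  have pdu: "partial_differentiable i u" "partial_differentiable i (partial i u)"
    and pdv: "partial_differentiable i v" "partial_differentiable i (partial i v)"
    using assms(1,2) unfolding C2_def by blast+
  have dU: "\<And>t. DERIV U t :> U' t" unfolding U_def U'_def e_def
    using partial_has_deriv[OF pdu(1)] by blast
  have dV: "\<And>t. DERIV V t :> V' t" unfolding V_def V'_def e_def
    using partial_has_deriv[OF pdv(1)] by blast
  have dU': "DERIV U' 0 :> partial i (partial i u) xs" unfolding U'_def e_def
    using partial_has_deriv[OF pdu(2), of xs 0] by simp
  have dV': "DERIV V' 0 :> partial i (partial i v) xs" unfolding V'_def e_def
    using partial_has_deriv[OF pdv(2), of xs 0] by simp
  have Upos: "\<And>t. U t > 0" unfolding U_def using assms(3) by blast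
  define g where "g t = V t - l * U t powr \<sigma> - \<delta> * (y \<bullet> y + 2 * t * (y \<bullet> e) + t\<^sup>2)" for t
  define G where "G t = V' t - l * (\<sigma> * (U t powr (\<sigma> - 1) * U' t)) - \<delta> * (2 * (y \<bullet> e) + 2 * t)" for t
  have g_eq: "g t = v (xs + t *\<^sub>R e) - l * u (xs + t *\<^sub>R e) powr \<sigma> - \<delta> * (norm (xs + t *\<^sub>R e - x1))\<^sup>2" for t
  proof -
    have h: "xs + t *\<^sub>R e - x1 = y + t *\<^sub>R e" unfolding y_def by simp
    show ?thesis unfolding g_def U_def V_def h norm_line[OF ee, of y t] by simp
  qed
  have gmax: "g t \<le> g 0" for t unfolding g_eq using mx[of "xs + t *\<^sub>R e"] by simp
  have dg: "DERIV g t :> G t" for t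
  proof -
    have p: "DERIV (\<lambda>t. U t powr \<sigma>) t :> \<sigma> * U t powr (\<sigma> - 1) * U' t"
      using DERIV_fun_powr[OF dU Upos, of \<sigma>] by simp
    have "DERIV (\<lambda>t. \<delta> * (y \<bullet> y + 2 * t * (y \<bullet> e) + t\<^sup>2)) t :> \<delta> * (2 * (y \<bullet> e) + 2 * t)"
      by (auto intro!: derivative_eq_intros)
    from DERIV_diff[OF DERIV_diff[OF dV DERIV_cmult[OF p, of l]] this]
    show ?thesis unfolding g_def G_def by (simp add: algebra_simps)
  qed
  have dG: "DERIV G 0 :> partial i (partial i v) xs - l*(\<sigma>*((\<sigma>-1) * u xs powr (\<sigma>-1-1) * partial i u xs * partial i u xs
           + u xs powr (\<sigma>-1) * partial i (partial i u) xs)) - \<delta>*2"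
  proof -
    have p: "DERIV (\<lambda>t. U t powr (\<sigma>-1)) 0 :> (\<sigma>-1) * U 0 powr (\<sigma> - 1 - 1) * U' 0"
      using DERIV_fun_powr[OF dU Upos, of "\<sigma>-1"] by simp
    have m: "DERIV (\<lambda>t. U t powr (\<sigma>-1) * U' t) 0 :> (\<sigma>-1) * U 0 powr (\<sigma> - 1 - 1) * U' 0 * U' 0 + U 0 powr (\<sigma>-1) * partial i (partial i u) xs"
      using DERIV_mult[OF p dU'] by (simp add: algebra_simps)
    have "DERIV (\<lambda>t. \<delta> * (2 * (y \<bullet> e) + 2 * t)) 0 :> \<delta> * 2"
      by (auto intro!: derivative_eq_intros)
    from DERIV_diff[OF DERIV_diff[OF dV' DERIV_cmult[OF DERIV_cmult[OF m, of \<sigma>], of l]] this]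
    show ?thesis unfolding G_def by (simp add: U_def U'_def algebra_simps)
  qed
  show ?thesis using second_deriv_max[OF dg dG gmax] .
qed

theorem lemma2p5:
  fixes u v :: "real^'n \<Rightarrow> real" and p q :: real
  assumes "p \<ge> q" and "q > 0" and "p * q > 1"
    and "\<And>x. u x > 0" and "\<And>x. v x > 0"
    and "bounded (range u)" and "bounded (range v)"
    and "C2 u" and "C2 v"
    and "\<And>x. - laplacian u x = v x powr p"
    and "\<And>x. - laplacian v x = u x powr q"
  shows "\<forall>x. v x powr (p + 1) \<le> (p + 1) / (q + 1) * u x powr (q + 1)"
proof -
  have p1: "p > 1"
  proof (rule ccontr)
    assume "\<not> p > 1"
    hence "p * q \<le> 1 * 1" using assms(1,2) by (intro mult_mono) auto
    thus False using assms(3) by simp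
  qed
  define \<sigma> where "\<sigma> = (q+1)/(p+1)"
  have \<sigma>pos: "\<sigma> > 0" and \<sigma>le: "\<sigma> \<le> 1" using assms(1,2) p1 unfolding \<sigma>_def by auto
  have \<sigma>p: "\<sigma> * (p+1) = q+1" using p1 unfolding \<sigma>_def by simp
  define l where "l = ((p+1)/(q+1)) powr (1/(p+1))"
  have lpos: "l > 0" unfolding l_def using assms(2) p1 by simp
  have lp1: "l powr (p+1) = (p+1)/(q+1)" unfolding l_def using assms(2) p1
    by (simp add: powr_powr)
  have lsig: "l * \<sigma> * l powr p = 1"
  proof -
    have "l * l powr p = l powr (p+1)" using lpos by (simp add: powr_add)
    hence "l * \<sigma> * l powr p = \<sigma> * ((p+1)/(q+1))" using lp1 by (simp add: mult_ac)
    thus ?thesis using assms(2) p1 lpos unfolding \<sigma>_def by simp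
  qed
  have uq: "u x powr q = l * \<sigma> * u x powr (\<sigma>-1) * (l * u x powr \<sigma>) powr p" for x
  proof -
    have ux: "u x > 0" using assms(4) by blast
    have "(l * u x powr \<sigma>) powr p = l powr p * u x powr (\<sigma> * p)"
      using lpos ux by (simp add: powr_mult powr_powr)
    hence "l * \<sigma> * u x powr (\<sigma>-1) * (l * u x powr \<sigma>) powr p
        = (l * \<sigma> * l powr p) * (u x powr (\<sigma>-1) * u x powr (\<sigma> * p))" by simp
    also have "\<dots> = u x powr (\<sigma> - 1 + \<sigma> * p)" using lsig ux by (simp add: powr_add)
    also have "\<sigma> - 1 + \<sigma> * p = q" using \<sigma>p by (simp add: algebra_simps)
    finally show ?thesis by simp
  qed
  have claim: "\<forall>x. v x \<le> l * u x powr \<sigma>"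
  proof (rule ccontr)
    assume "\<not> (\<forall>x. v x \<le> l * u x powr \<sigma>)"
    then obtain x0 where x0: "v x0 > l * u x0 powr \<sigma>" by (auto simp: not_le)
    obtain M where M: "M > 0" "\<And>x. u x \<le> M"
      using assms(6) unfolding bounded_pos by (metis abs_le_D1 rangeI real_norm_def)
    obtain K where K: "K > 0" "\<And>x. v x \<le> K"
      using assms(7) unfolding bounded_pos by (metis abs_le_D1 rangeI real_norm_def)
    define w where "w x = v x - l * u x powr \<sigma>" for x
    have wK: "w x \<le> K" for x unfolding w_def
      using K(2)[of x] mult_nonneg_nonneg[of l "u x powr \<sigma>"] lpos powr_ge_zero[of "u x" \<sigma>] by linarith
    have bdd: "bdd_above (range w)" using wK by (auto intro!: bdd_aboveI)
    define m where "m = Sup (range w)"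
    have wm: "w x \<le> m" for x unfolding m_def using bdd by (simp add: cSup_upper)
    have mpos: "m > 0" using wm[of x0] x0 unfolding w_def by simp
    define \<eta> where "\<eta> = m/2"
    have \<eta>pos: "\<eta> > 0" using mpos \<eta>_def by simp
    have "\<eta> < Sup (range w)" using mpos \<eta>_def m_def by simp
    then obtain x1 where x1: "\<eta> < w x1" using less_cSup_iff[OF _ bdd] by auto
    define c0 where "c0 = l * \<sigma> * M powr (\<sigma>-1) * \<eta> powr p"
    have c0pos: "c0 > 0" unfolding c0_def using lpos \<sigma>pos M \<eta>pos by simp
    define N where "N = real CARD('n)"
    have Npos: "N > 0" unfolding N_def by simp
    define \<delta> where "\<delta> = c0 / (4 * N)"
    have \<delta>pos: "\<delta> > 0" unfolding \<delta>_def using c0pos Npos by simp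
    define r where "r = sqrt (m / \<delta>)"
    define z where "z x = w x - \<delta> * (norm (x - x1))\<^sup>2" for x
    have cu: "continuous_on UNIV u" and cv: "continuous_on UNIV v"
      using assms(8,9) unfolding C2_def by blast+
    have cz: "continuous_on (cball x1 r) z"
    proof -
      have "continuous_on UNIV z" unfolding z_def w_def
        using cu cv assms(4) by (auto intro!: continuous_intros simp: less_imp_neq[symmetric])
      thus ?thesis by (rule continuous_on_subset) simp
    qed
    have "r \<ge> 0" unfolding r_def using mpos \<delta>pos by simp
    then obtain xs where xs: "xs \<in> cball x1 r" "\<And>y. y \<in> cball x1 r \<Longrightarrow> z y \<le> z xs"
      using continuous_attains_sup[OF compact_cball _ cz] by (metis centre_in_cball empty_iff)
    have zx1: "z x1 = w x1" unfolding z_def by simp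
    have gmax: "z y \<le> z xs" for y
    proof (cases "y \<in> cball x1 r")
      case True thus ?thesis using xs by blast
    next
      case False
      hence "norm (y - x1) > r" by (simp add: dist_norm norm_minus_commute)
      hence "(norm (y - x1))\<^sup>2 > r\<^sup>2" using \<open>r \<ge> 0\<close> by (simp add: power_strict_mono)
      moreover have "r\<^sup>2 = m / \<delta>" unfolding r_def using mpos \<delta>pos by simp
      ultimately have "\<delta> * (norm (y - x1))\<^sup>2 > m" using \<delta>pos by (simp add: field_simps)
      hence "z y < 0" unfolding z_def using wm[of y] by simp
      also have "0 < z x1" using zx1 x1 \<eta>pos by simp
      also have "z x1 \<le> z xs" using xs(2)[of x1] \<open>r \<ge> 0\<close> by simp
      finally show ?thesis by simp
    qed
    have wxs: "w xs > \<eta>"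
    proof -
      have "w xs \<ge> z xs" unfolding z_def using \<delta>pos by simp
      thus ?thesis using gmax[of x1] zx1 x1 by simp
    qed
    have Di: "partial i (partial i v) xs - l*(\<sigma>*((\<sigma>-1) * u xs powr (\<sigma>-1-1) * partial i u xs * partial i u xs
           + u xs powr (\<sigma>-1) * partial i (partial i u) xs)) - \<delta>*2 \<le> 0" for i
      by (rule coord_ineq[OF assms(8,9,4)]) (use gmax in \<open>simp add: z_def w_def\<close>)
    hence "(\<Sum>i\<in>UNIV. partial i (partial i v) xs - l*(\<sigma>*((\<sigma>-1) * u xs powr (\<sigma>-1-1) * partial i u xs * partial i u xs
           + u xs powr (\<sigma>-1) * partial i (partial i u) xs)) - \<delta>*2) \<le> 0"
      by (intro sum_nonpos) 
    moreover have "(\<Sum>i\<in>UNIV. partial i (partial i v) xs - l*(\<sigma>*((\<sigma>-1) * u xs powr (\<sigma>-1-1) * partial i u xs * partial i u xs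
           + u xs powr (\<sigma>-1) * partial i (partial i u) xs)) - \<delta>*2)
       = laplacian v xs - l*\<sigma>*(\<sigma>-1) * u xs powr (\<sigma>-1-1) * (\<Sum>i\<in>UNIV. partial i u xs * partial i u xs)
         - l*\<sigma>* u xs powr (\<sigma>-1) * laplacian u xs - \<delta>*2*N"
      unfolding laplacian_def N_def
      by (simp add: sum_subtractf sum.distrib sum_distrib_left algebra_simps)
    moreover have "l*\<sigma>*(\<sigma>-1) * u xs powr (\<sigma>-1-1) * (\<Sum>i\<in>UNIV. partial i u xs * partial i u xs) \<le> 0"
    proof -
      have "(\<Sum>i\<in>UNIV. partial i u xs * partial i u xs) \<ge> 0" by (intro sum_nonneg) simp
      moreover have "l*\<sigma>*(\<sigma>-1) * u xs powr (\<sigma>-1-1) \<le> 0"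
        using lpos \<sigma>pos \<sigma>le by (intro mult_nonpos_nonneg mult_nonneg_nonpos) auto
      ultimately show ?thesis by (simp add: mult_nonpos_nonneg)
    qed
    ultimately have A0: "laplacian v xs - l*\<sigma>* u xs powr (\<sigma>-1) * laplacian u xs - \<delta>*2*N \<le> 0"
      by linarith
    have L: "laplacian u xs = - (v xs powr p)" "laplacian v xs = -(u xs powr q)"
      using assms(10,11)[of xs] by linarith+
    have A: "l*\<sigma>* u xs powr (\<sigma>-1) * v xs powr p - u xs powr q - \<delta>*2*N \<le> 0"
      using A0 unfolding L by simp
    define a where "a = l * u xs powr \<sigma>"
    have a0: "a \<ge> 0" unfolding a_def using lpos by simp
    have va: "v xs \<ge> a + \<eta>" using wxs unfolding w_def a_def by simp
    have "v xs powr p \<ge> (a + \<eta>) powr p" using va a0 \<eta>pos p1 by (intro powr_mono2) auto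
    moreover have "(a + \<eta>) powr p \<ge> a powr p + \<eta> powr p"
      using superadd_powr[of a \<eta> p] a0 \<eta>pos p1 by simp
    ultimately have vd: "v xs powr p - a powr p \<ge> \<eta> powr p" by simp
    have um: "u xs powr (\<sigma>-1) \<ge> M powr (\<sigma>-1)"
      using powr_mono2'[of "\<sigma>-1" "u xs" M] \<sigma>le assms(4)[of xs] M(2)[of xs] by simp
    have "l*\<sigma>* u xs powr (\<sigma>-1) * (v xs powr p - a powr p) \<ge> l*\<sigma>*M powr (\<sigma>-1) * \<eta> powr p"
      using lpos \<sigma>pos um vd by (intro mult_mono) auto
    hence "l*\<sigma>* u xs powr (\<sigma>-1) * v xs powr p - u xs powr q \<ge> c0"
      unfolding c0_def using uq[of xs] unfolding a_def by (simp add: algebra_simps)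
    moreover have "\<delta>*2*N = c0/2" unfolding \<delta>_def using Npos by simp
    ultimately show False using A c0pos by linarith
  qed
  show ?thesis
  proof
    fix x
    have ux: "u x > 0" and vx: "v x > 0" using assms(4,5) by blast+
    have "v x powr (p+1) \<le> (l * u x powr \<sigma>) powr (p+1)"
      using claim vx p1 by (intro powr_mono2) (auto simp: less_imp_le)
    also have "\<dots> = l powr (p+1) * u x powr (\<sigma> * (p+1))"
      using lpos ux by (simp add: powr_mult powr_powr)
    also have "\<dots> = (p + 1) / (q + 1) * u x powr (q + 1)" using lp1 \<sigma>p by simp
    finally show "v x powr (p + 1) \<le> (p + 1) / (q + 1) * u x powr (q + 1)" .
  qed
qed

end
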